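(* Let $I=(i_1,\ldots,i_m)$ and $J=(j_1,\ldots,j_m)$ with $i_k,j_k\in\{1,\ldots,n_k\}$. The basis tensor $\mathcal{E}^{IJ}(1)$ is $\mathbb{R}$-Hermitian decomposable if and only if $I-J$ has at most one nonzero entry. Moreover, if $I=J$ then $\operatorname{hrank}_{\mathbb{R}}\mathcal{E}^{IJ}(1)=1$, and if $I$ and $J$ differ in exactly one entry then $\operatorname{hrank}_{\mathbb{R}}\mathcal{E}^{IJ}(1)=2$.
   Context: For vectors $v_i$, $[v_1,\ldots,v_m]_{\otimes h}:=v_1\otimes\cdots\otimes v_m\otimes\overline{v_1}\otimes\cdots\otimes\overline{v_m}$. $\mathcal{E}^{IJ}(1)\in\mathbb{R}^{n_1\times\cdots\times n_m\times n_1\times\cdots\times n_m}$ is the tensor whose entries at positions $(i_1,\ldots,i_m,j_1,\ldots,j_m)$ and $(j_1,\ldots,j_m,i_1,\ldots,i_m)$ equal $1$ and all other entries are $0$. A real tensor $\mathcal{H}$ with $\mathcal{H}_{i_1\ldots i_mj_1\ldots j_m}=\mathcal{H}_{j_1\ldots j_mi_1\ldots i_m}$ is $\mathbb{R}$-Hermitian decomposable if $\mathcal{H}=\sum_{i=1}^r\lambda_i[u_i^1,\ldots,u_i^m]_{\otimes h}$ with $\lambda_i\in\mathbb{R}$ and $u_i^j\in\mathbb{R}^{n_j}$; the smallest such $r$ is $\operatorname{hrank}_{\mathbb{R}}(\mathcal{H})$. *)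

theory Defs
  imports Complex_Main
begin

text \<open>Dimensions: a list dims = [n_1,...,n_m] (so m = length dims).
  A multi-index I = (i_1,...,i_m) is a list with 1 <= i_k <= n_k (1-based, as in the paper).
  A real tensor of size n_1 x ... x n_m x n_1 x ... x n_m is a function
  nat list => nat list => real, H I J = H_{i_1..i_m j_1..j_m}; only valid indices matter.
  A vector u in R^{n_k} is a function nat => real (only entries 1..n_k matter).\<close>

definition valid_idx :: "nat list \<Rightarrow> nat list \<Rightarrow> bool" where
  "valid_idx dims I \<longleftrightarrow> length I = length dims \<and> (\<forall>k<length dims. 1 \<le> I ! k \<and> I ! k \<le> dims ! k)"

type_synonym rtensor = "nat list \<Rightarrow> nat list \<Rightarrow> real"

text \<open>[u^1,...,u^m]_{\<otimes>h} over the reals (conjugation is the identity).\<close>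
definition herm_outer :: "nat \<Rightarrow> (nat \<Rightarrow> nat \<Rightarrow> real) \<Rightarrow> rtensor" where
  "herm_outer m u = (\<lambda>I J. (\<Prod>k<m. u k (I ! k)) * (\<Prod>k<m. u k (J ! k)))"

definition basisE :: "nat list \<Rightarrow> nat list \<Rightarrow> rtensor" where
  "basisE I J = (\<lambda>K L. if (K = I \<and> L = J) \<or> (K = J \<and> L = I) then 1 else 0)"

definition herm_symmetric :: "nat list \<Rightarrow> rtensor \<Rightarrow> bool" where
  "herm_symmetric dims H \<longleftrightarrow> (\<forall>I J. valid_idx dims I \<and> valid_idx dims J \<longrightarrow> H I J = H J I)"

definition herm_decomp_len :: "nat list \<Rightarrow> rtensor \<Rightarrow> nat \<Rightarrow> bool" where
  "herm_decomp_len dims H r \<longleftrightarrow>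
     (\<exists>(lam :: nat \<Rightarrow> real) (u :: nat \<Rightarrow> nat \<Rightarrow> nat \<Rightarrow> real).
        \<forall>I J. valid_idx dims I \<and> valid_idx dims J \<longrightarrow>
          H I J = (\<Sum>i<r. lam i * herm_outer (length dims) (u i) I J))"

definition R_herm_decomposable :: "nat list \<Rightarrow> rtensor \<Rightarrow> bool" where
  "R_herm_decomposable dims H \<longleftrightarrow> herm_symmetric dims H \<and> (\<exists>r. herm_decomp_len dims H r)"

definition hrank_R :: "nat list \<Rightarrow> rtensor \<Rightarrow> nat" where
  "hrank_R dims H = (LEAST r. herm_decomp_len dims H r)"

end

theory Submission
  imports Defs
begin

lemma herm_outer_prod: "herm_outer m u K L = (\<Prod>k<m. u k (K!k) * u k (L!k))"
  by (simp add: herm_outer_def prod.distrib)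

lemma swap_inv:
  assumes "p < m" "length K = m" "length L = m"
  shows "herm_outer m u (K[p := L!p]) (L[p := K!p]) = herm_outer m u K L"
  unfolding herm_outer_prod
  by (rule prod.cong) (use assms in \<open>auto simp: nth_list_update mult.commute\<close>)

lemma valid_upd:
  assumes "valid_idx dims K" "valid_idx dims L" "p < length dims"
  shows "valid_idx dims (K[p := L!p])"
  using assms by (auto simp: valid_idx_def nth_list_update)

lemma ind_prod:
  assumes "length K = m" "length A = m"
  shows "(\<Prod>k<m. (if K!k = A!k then 1 else 0::real)) = (if K = A then 1 else 0)"
proof (cases "K = A")
  case True then show ?thesis by simp
next
  case False
  then obtain k where "k < m" "K!k \<noteq> A!k" using assms by (auto simp: list_eq_iff_nth_eq)
  then have "(\<Prod>k<m. (if K!k = A!k then 1 else 0::real)) = 0"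
    by (intro prod_zero) auto
  then show ?thesis using False by simp
qed

lemma not_decomp:
  assumes "valid_idx dims I" "valid_idx dims J" "p < length dims" "q < length dims"
    "p \<noteq> q" "I!p \<noteq> J!p" "I!q \<noteq> J!q"
  shows "\<not> herm_decomp_len dims (basisE I J) r"
proof
  assume "herm_decomp_len dims (basisE I J) r"
  then obtain lam u where H: "\<And>K L. valid_idx dims K \<Longrightarrow> valid_idx dims L \<Longrightarrow>
      basisE I J K L = (\<Sum>i<r. lam i * herm_outer (length dims) (u i) K L)"
    unfolding herm_decomp_len_def by blast
  define I' where "I' = I[p := J!p]"
  define J' where "J' = J[p := I!p]"
  have v: "valid_idx dims I'" "valid_idx dims J'"
    unfolding I'_def J'_def using assms valid_upd by auto
  have len: "length I = length dims" "length J = length dims"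
    using assms by (auto simp: valid_idx_def)
  have "basisE I J I' J' = basisE I J I J"
    using H[OF v] H[OF assms(1,2)] swap_inv[OF assms(3) len] unfolding I'_def J'_def by simp
  moreover have "I' \<noteq> I" using assms len unfolding I'_def by (metis nth_list_update_eq)
  moreover have "I' \<noteq> J" using assms len unfolding I'_def by (metis nth_list_update_neq)
  ultimately show False by (simp add: basisE_def)
qed

lemma decomp1:
  assumes "valid_idx dims I"
  shows "herm_decomp_len dims (basisE I I) 1"
proof -
  define u where "u = (\<lambda>(i::nat) k x. if x = I!k then 1 else (0::real))"
  show ?thesis unfolding herm_decomp_len_def
  proof (intro exI[of _ "\<lambda>_. 1"] exI[of _ u] allI impI)
    fix K L assume "valid_idx dims K \<and> valid_idx dims L"
    then have "length K = length dims" "length L = length dims" "length I = length dims"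
      using assms by (auto simp: valid_idx_def)
    then show "basisE I I K L = (\<Sum>i<1. 1 * herm_outer (length dims) (u i) K L)"
      by (simp add: herm_outer_def u_def ind_prod basisE_def)
  qed
qed

lemma decomp2:
  assumes "valid_idx dims I" "valid_idx dims J" "p < length dims"
    "\<forall>k<length dims. k \<noteq> p \<longrightarrow> I!k = J!k" "I!p \<noteq> J!p"
  shows "herm_decomp_len dims (basisE I J) 2"
proof -
  define m where "m = length dims"
  define a where "a = I!p"
  define b where "b = J!p"
  have ab: "a \<noteq> b" using assms by (simp add: a_def b_def)
  define u where "u = (\<lambda>(i::nat) k x. if k = p then (if x = a then 1 else 0) +
      (if i = 0 then 1 else -1) * (if x = b then 1 else 0) else (if x = I!k then 1 else (0::real)))"
  define lam where "lam = (\<lambda>i::nat. if i = 0 then 1/2 else -1/2::real)"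
  show ?thesis unfolding herm_decomp_len_def
  proof (intro exI[of _ lam] exI[of _ u] allI impI)
    fix K L assume "valid_idx dims K \<and> valid_idx dims L"
    then have lK: "length K = m" and lL: "length L = m" and lI: "length I = m" and lJ: "length J = m"
      using assms by (auto simp: valid_idx_def m_def)
    define P where "P = (\<forall>k\<in>{..<m}-{p}. K!k = I!k \<and> L!k = I!k)"
    define c where "c = (\<Prod>k\<in>{..<m}-{p}. (if K!k = I!k then 1 else 0) * (if L!k = I!k then 1 else (0::real)))"
    have c: "c = (if P then 1 else 0)"
    proof (cases P)
      case True then show ?thesis unfolding c_def P_def by (auto intro!: prod.neutral)
    next
      case False
      then obtain k where "k \<in> {..<m}-{p}" "\<not> (K!k = I!k \<and> L!k = I!k)" unfolding P_def by blast
      then have "c = 0" unfolding c_def by (intro prod_zero) auto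
      then show ?thesis using False by simp
    qed
    have ho: "herm_outer m (u i) K L = c * (u i p (K!p) * u i p (L!p))" for i
    proof -
      have "herm_outer m (u i) K L = u i p (K!p) * u i p (L!p) *
          (\<Prod>k\<in>{..<m}-{p}. u i k (K!k) * u i k (L!k))"
        unfolding herm_outer_prod using assms(3) m_def by (subst prod.remove[of _ p]) auto
      also have "(\<Prod>k\<in>{..<m}-{p}. u i k (K!k) * u i k (L!k)) = c"
        unfolding c_def by (rule prod.cong) (auto simp: u_def)
      finally show ?thesis by simp
    qed
    have sum: "(\<Sum>i<2. lam i * herm_outer m (u i) K L) =
        c * ((if K!p = a \<and> L!p = b \<or> K!p = b \<and> L!p = a then 1 else 0))"
    proof -
      have "(\<Sum>i<2. lam i * herm_outer m (u i) K L) =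
          c * (1/2 * (u 0 p (K!p) * u 0 p (L!p)) - 1/2 * (u 1 p (K!p) * u 1 p (L!p)))"
        by (simp only: ho numeral_2_eq_2 sum.lessThan_Suc lessThan_0 sum.empty) (simp add: lam_def algebra_simps)
      also have "\<dots> = c * ((if K!p = a \<and> L!p = b \<or> K!p = b \<and> L!p = a then 1 else 0))"
        using ab by (simp add: u_def)
      finally show ?thesis .
    qed
    have "basisE I J K L = c * ((if K!p = a \<and> L!p = b \<or> K!p = b \<and> L!p = a then 1 else 0))"
    proof (cases P)
      case True
      have eqX: "X = Y \<longleftrightarrow> X!p = Y!p" if "length X = m" "length Y = m"
          "\<forall>k\<in>{..<m}-{p}. X!k = Y!k" for X Y :: "nat list"
      proof
        assume "X!p = Y!p"
        then show "X = Y" using that unfolding list_eq_iff_nth_eq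
          by (metis Diff_iff lessThan_iff singletonD)
      qed simp
      have JI: "\<forall>k\<in>{..<m}-{p}. J!k = I!k" using assms(4) m_def by auto
      have "K = I \<longleftrightarrow> K!p = a" "K = J \<longleftrightarrow> K!p = b" "L = I \<longleftrightarrow> L!p = a" "L = J \<longleftrightarrow> L!p = b"
        unfolding a_def b_def
        by (rule eqX; use True JI lK lL lI lJ in \<open>auto simp: P_def\<close>)+
      then show ?thesis using True c by (simp add: basisE_def)
    next
      case False
      have "\<not> (K = I \<and> L = J)" "\<not> (K = J \<and> L = I)"
        using False assms(4) unfolding P_def m_def by auto
      then show ?thesis using False c by (simp add: basisE_def)
    qed
    then show "basisE I J K L = (\<Sum>i<2. lam i * herm_outer (length dims) (u i) K L)"
      using sum m_def by simp
  qed
qed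

lemma not_decomp01:
  assumes "valid_idx dims I" "valid_idx dims J" "I \<noteq> J" "r < 2"
  shows "\<not> herm_decomp_len dims (basisE I J) r"
proof
  assume "herm_decomp_len dims (basisE I J) r"
  then obtain lam u where H: "\<And>K L. valid_idx dims K \<Longrightarrow> valid_idx dims L \<Longrightarrow>
      basisE I J K L = (\<Sum>i<r. lam i * herm_outer (length dims) (u i) K L)"
    unfolding herm_decomp_len_def by blast
  have "r = 0 \<or> r = 1" using assms by auto
  then show False
  proof
    assume "r = 0" then show False using H[OF assms(1,2)] by (simp add: basisE_def)
  next
    assume r: "r = 1"
    have "basisE I J I I * basisE I J J J = basisE I J I J * basisE I J I J"
      using H[OF assms(1,1)] H[OF assms(2,2)] H[OF assms(1,2)] r
      by (simp add: herm_outer_def algebra_simps)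
    then show False using assms by (simp add: basisE_def)
  qed
qed

theorem corollary3p4:
  fixes dims I J :: "nat list"
  assumes "valid_idx dims I" and "valid_idx dims J"
  shows "(R_herm_decomposable dims (basisE I J)
            \<longleftrightarrow> card {k. k < length dims \<and> I ! k \<noteq> J ! k} \<le> 1)
       \<and> (I = J \<longrightarrow> hrank_R dims (basisE I J) = 1)
       \<and> (card {k. k < length dims \<and> I ! k \<noteq> J ! k} = 1 \<longrightarrow> hrank_R dims (basisE I J) = 2)"
proof -
  define S where "S = {k. k < length dims \<and> I ! k \<noteq> J ! k}"
  have fin: "finite S" unfolding S_def by auto
  have lens: "length I = length dims" "length J = length dims" using assms by (auto simp: valid_idx_def)
  have sym: "herm_symmetric dims (basisE I J)" by (auto simp: herm_symmetric_def basisE_def)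
  have S0: "S = {} \<longleftrightarrow> I = J" unfolding S_def using lens by (auto simp: list_eq_iff_nth_eq)
  have D1: "I = J \<Longrightarrow> herm_decomp_len dims (basisE I J) 1" using decomp1[OF assms(1)] by simp
  have D2: "card S = 1 \<Longrightarrow> herm_decomp_len dims (basisE I J) 2"
  proof -
    assume "card S = 1"
    then obtain p where Sp: "S = {p}" by (auto simp: card_Suc_eq)
    then have "p \<in> S" by auto
    then show ?thesis using Sp unfolding S_def
      by (intro decomp2[OF assms, of p]) auto
  qed
  have part1: "R_herm_decomposable dims (basisE I J) \<longleftrightarrow> card S \<le> 1"
  proof
    assume "R_herm_decomposable dims (basisE I J)"
    then obtain r where r: "herm_decomp_len dims (basisE I J) r"
      unfolding R_herm_decomposable_def by auto
    show "card S \<le> 1"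
    proof (rule ccontr)
      assume "\<not> card S \<le> 1"
      then have "card S \<ge> 2" by simp
      then obtain p q where "p \<in> S" "q \<in> S" "p \<noteq> q"
        by (metis One_nat_def card_le_Suc_iff numeral_2_eq_2 insert_iff)
      then show False using not_decomp[OF assms, of p q r] r unfolding S_def by auto
    qed
  next
    assume "card S \<le> 1"
    then have "card S = 0 \<or> card S = 1" by auto
    then show "R_herm_decomposable dims (basisE I J)"
      using D1 D2 S0 fin sym unfolding R_herm_decomposable_def by auto
  qed
  have part2: "I = J \<longrightarrow> hrank_R dims (basisE I J) = 1"
  proof
    assume e: "I = J"
    show "hrank_R dims (basisE I J) = 1" unfolding hrank_R_def
    proof (rule Least_equality)
      show "herm_decomp_len dims (basisE I J) 1" using D1 e .
    next
      fix y assume h: "herm_decomp_len dims (basisE I J) y"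
      show "1 \<le> y"
      proof (rule ccontr)
        assume "\<not> 1 \<le> y"
        then have "y = 0" by simp
        then show False using h assms unfolding herm_decomp_len_def
          by (metis (no_types) lessThan_0 sum.empty basisE_def zero_neq_one)
      qed
    qed
  qed
  have part3: "card S = 1 \<longrightarrow> hrank_R dims (basisE I J) = 2"
  proof
    assume c: "card S = 1"
    then have ne: "I \<noteq> J" using S0 by auto
    show "hrank_R dims (basisE I J) = 2" unfolding hrank_R_def
    proof (rule Least_equality)
      show "herm_decomp_len dims (basisE I J) 2" using D2 c .
    next
      fix y assume h: "herm_decomp_len dims (basisE I J) y"
      show "2 \<le> y" using not_decomp01[OF assms ne, of y] h by linarith
    qed
  qed
  show ?thesis using part1 part2 part3 unfolding S_def by blast
qed

end
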